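(* Let $V=\bigoplus_{i\in\mathbb N}\mathbb R$ (finitely supported sequences, coordinatewise addition) and $F=\mathbb R$, where $\alpha\in\mathbb R$ acts by $\alpha\cdot(v_i)_i=(\alpha^{2i+1}v_i)_i$. Then $(V,F)$ is a near vector space, but for any non-principal ultrafilter $\mathcal U$ on $\mathbb N$ the ultrapower $\mathcal W=V^{\mathbb N}/\mathcal U$ (as an $\mathcal L_{Fnvs}$-structure) is not a near vector space over $F$: its quasi-kernel does not generate it. Moreover $Q(\mathcal W)\subsetneq \prod Q(V)/\mathcal U$. Consequently the class of near vector spaces over $F$ is not elementary (not axiomatisable by first-order sentences in $\mathcal L_{Fnvs}$).
   Context: An F-group is a pair $(V,F)$ where $(V,+)$ is a group and $F$ is a set of endomorphisms of $V$ such that: the maps $0,1,-1$ lie in $F$; $F\setminus\{0\}$ is a subgroup of $\mathrm{Aut}(V,+)$ under composition; and if $\alpha x=\beta x$ with $\alpha,\beta\in F$, $x\in V$ then $\alpha=\beta$ or $x=0$. The quasi-kernel $Q(V)$ is the set of $u\in V$ such that for all $\alpha,\beta\in F$ there is $\gamma\in F$ with $\alpha u+\beta u=\gamma u$. $(V,F)$ is a near vector space if $Q(V)$ generates $(V,+)$. The language $\mathcal L_{Fnvs}=\{+,0,(\lambda)_{\lambda\in F}\}$ has a unary function symbol for each $\lambda\in F$, interpreted as the action of $\lambda$; ultrapowers are taken in this language, so $F$ acts on $\mathcal W$ coordinatewise. *)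

theory Defs
  imports Complex_Main "HOL-Algebra.Group" "HOL-Algebra.Generated_Groups"
begin

text \<open>An F-group is given by a group G (written additively in the paper) together with
a set S of labels and an action act; the set F of the paper is the set of maps
act a (a in S), maps being compared on the carrier.\<close>

definition same_map :: "('a, 'b) monoid_scheme \<Rightarrow> ('a \<Rightarrow> 'a) \<Rightarrow> ('a \<Rightarrow> 'a) \<Rightarrow> bool" where
  "same_map G f g \<longleftrightarrow> (\<forall>x\<in>carrier G. f x = g x)"

definition F_group :: "('a, 'b) monoid_scheme \<Rightarrow> 's set \<Rightarrow> ('s \<Rightarrow> 'a \<Rightarrow> 'a) \<Rightarrow> bool" where
  "F_group G S act \<longleftrightarrow>
     group G \<and>
     (\<forall>a\<in>S. act a \<in> hom G G) \<and>
     \<comment> \<open>the maps 0, 1, -1 belong to F\<close>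
     (\<exists>a\<in>S. same_map G (act a) (\<lambda>x. \<one>\<^bsub>G\<^esub>)) \<and>
     (\<exists>a\<in>S. same_map G (act a) (\<lambda>x. x)) \<and>
     (\<exists>a\<in>S. same_map G (act a) (\<lambda>x. inv\<^bsub>G\<^esub> x)) \<and>
     \<comment> \<open>F minus the zero map is a subgroup of Aut(G) under composition\<close>
     (\<forall>a\<in>S. \<not> same_map G (act a) (\<lambda>x. \<one>\<^bsub>G\<^esub>) \<longrightarrow> bij_betw (act a) (carrier G) (carrier G)) \<and>
     (\<forall>a\<in>S. \<forall>b\<in>S. \<not> same_map G (act a) (\<lambda>x. \<one>\<^bsub>G\<^esub>) \<longrightarrow> \<not> same_map G (act b) (\<lambda>x. \<one>\<^bsub>G\<^esub>) \<longrightarrow>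
        (\<exists>c\<in>S. same_map G (act c) (act a \<circ> act b))) \<and>
     (\<forall>a\<in>S. \<not> same_map G (act a) (\<lambda>x. \<one>\<^bsub>G\<^esub>) \<longrightarrow>
        (\<exists>c\<in>S. \<forall>x\<in>carrier G. act c (act a x) = x)) \<and>
     \<comment> \<open>fixed-point-freeness\<close>
     (\<forall>a\<in>S. \<forall>b\<in>S. \<forall>x\<in>carrier G. act a x = act b x \<longrightarrow> same_map G (act a) (act b) \<or> x = \<one>\<^bsub>G\<^esub>)"

definition quasi_kernel :: "('a, 'b) monoid_scheme \<Rightarrow> 's set \<Rightarrow> ('s \<Rightarrow> 'a \<Rightarrow> 'a) \<Rightarrow> 'a set" where
  "quasi_kernel G S act =
     {u \<in> carrier G. \<forall>a\<in>S. \<forall>b\<in>S. \<exists>c\<in>S. act a u \<otimes>\<^bsub>G\<^esub> act b u = act c u}"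

definition near_vector_space :: "('a, 'b) monoid_scheme \<Rightarrow> 's set \<Rightarrow> ('s \<Rightarrow> 'a \<Rightarrow> 'a) \<Rightarrow> bool" where
  "near_vector_space G S act \<longleftrightarrow>
     F_group G S act \<and> generate G (quasi_kernel G S act) = carrier G"

definition ultrafilter :: "'i filter \<Rightarrow> bool" where
  "ultrafilter U \<longleftrightarrow> U \<noteq> bot \<and> (\<forall>P. eventually P U \<or> eventually (\<lambda>i. \<not> P i) U)"

definition nonprincipal :: "'i filter \<Rightarrow> bool" where
  "nonprincipal U \<longleftrightarrow> (\<forall>n. \<not> eventually (\<lambda>i. i = n) U)"

definition up_class :: "'i filter \<Rightarrow> ('a, 'b) monoid_scheme \<Rightarrow> ('i \<Rightarrow> 'a) \<Rightarrow> ('i \<Rightarrow> 'a) set" where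
  "up_class U G f = {g. (\<forall>i. g i \<in> carrier G) \<and> eventually (\<lambda>i. g i = f i) U}"

definition ultrapower :: "'i filter \<Rightarrow> ('a, 'b) monoid_scheme \<Rightarrow> ('i \<Rightarrow> 'a) set monoid" where
  "ultrapower U G =
     \<lparr> carrier = {up_class U G f | f. \<forall>i. f i \<in> carrier G},
       mult = (\<lambda>X Y. {h. \<exists>x\<in>X. \<exists>y\<in>Y. h \<in> up_class U G (\<lambda>i. x i \<otimes>\<^bsub>G\<^esub> y i)}),
       one = up_class U G (\<lambda>i. \<one>\<^bsub>G\<^esub>) \<rparr>"

definition up_act :: "'i filter \<Rightarrow> ('a, 'b) monoid_scheme \<Rightarrow> ('s \<Rightarrow> 'a \<Rightarrow> 'a) \<Rightarrow> 's \<Rightarrow> ('i \<Rightarrow> 'a) set \<Rightarrow> ('i \<Rightarrow> 'a) set" where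
  "up_act U G act a X = {h. \<exists>x\<in>X. h \<in> up_class U G (\<lambda>i. act a (x i))}"

definition up_prod :: "'i filter \<Rightarrow> ('a, 'b) monoid_scheme \<Rightarrow> 'a set \<Rightarrow> ('i \<Rightarrow> 'a) set set" where
  "up_prod U G A = {up_class U G f | f. \<forall>i. f i \<in> A}"

definition Vex :: "(nat \<Rightarrow> real) monoid" where
  "Vex = \<lparr> carrier = {v. finite {i. v i \<noteq> 0}}, mult = (\<lambda>v w i. v i + w i), one = (\<lambda>i. 0) \<rparr>"

definition act_ex :: "real \<Rightarrow> (nat \<Rightarrow> real) \<Rightarrow> (nat \<Rightarrow> real)" where
  "act_ex a v = (\<lambda>i. a ^ (2 * i + 1) * v i)"

end

theory Submission
  imports Defs
begin

lemma up_class_mem: "(\<forall>i. f i \<in> carrier G) \<Longrightarrow> f \<in> up_class U G f"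
  by (simp add: up_class_def)

lemma up_class_eqI:
  assumes "eventually (\<lambda>i. f i = g i) U"
  shows "up_class U G f = up_class U G g"
proof (intro Set.set_eqI iffI)
  fix h assume h: "h \<in> up_class U G f"
  then have "eventually (\<lambda>i. h i = f i) U" by (simp add: up_class_def)
  then have "eventually (\<lambda>i. h i = g i) U" using assms by eventually_elim simp
  then show "h \<in> up_class U G g" using h by (simp add: up_class_def)
next
  fix h assume h: "h \<in> up_class U G g"
  then have "eventually (\<lambda>i. h i = g i) U" by (simp add: up_class_def)
  then have "eventually (\<lambda>i. h i = f i) U" using assms by eventually_elim simp
  then show "h \<in> up_class U G f" using h by (simp add: up_class_def)
qed

lemma up_class_eqD:
  assumes "up_class U G f = up_class U G g" "\<forall>i. f i \<in> carrier G"
  shows "eventually (\<lambda>i. f i = g i) U"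
proof -
  have "f \<in> up_class U G g" using up_class_mem[OF assms(2), of U] assms(1) by simp
  then show ?thesis by (simp add: up_class_def)
qed

lemma up_mult_class:
  assumes "\<forall>i. f i \<in> carrier G" "\<forall>i. g i \<in> carrier G"
  shows "mult (ultrapower U G) (up_class U G f) (up_class U G g)
       = up_class U G (\<lambda>i. f i \<otimes>\<^bsub>G\<^esub> g i)"
proof (intro Set.set_eqI iffI)
  fix h assume "h \<in> mult (ultrapower U G) (up_class U G f) (up_class U G g)"
  then obtain x y where x: "x \<in> up_class U G f" and y: "y \<in> up_class U G g"
    and h: "h \<in> up_class U G (\<lambda>i. x i \<otimes>\<^bsub>G\<^esub> y i)"
    unfolding ultrapower_def monoid.simps by blast
  have ev: "eventually (\<lambda>i. x i \<otimes>\<^bsub>G\<^esub> y i = f i \<otimes>\<^bsub>G\<^esub> g i) U"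
  proof -
    have "eventually (\<lambda>i. x i = f i) U" "eventually (\<lambda>i. y i = g i) U"
      using x y unfolding up_class_def by auto
    then show ?thesis by eventually_elim simp
  qed
  show "h \<in> up_class U G (\<lambda>i. f i \<otimes>\<^bsub>G\<^esub> g i)"
    using h unfolding up_class_eqI[OF ev, of G] .
next
  fix h assume "h \<in> up_class U G (\<lambda>i. f i \<otimes>\<^bsub>G\<^esub> g i)"
  then show "h \<in> mult (ultrapower U G) (up_class U G f) (up_class U G g)"
    using up_class_mem[OF assms(1)] up_class_mem[OF assms(2)]
    unfolding ultrapower_def monoid.simps by blast
qed

lemma up_act_class:
  assumes "\<forall>i. f i \<in> carrier G"
  shows "up_act U G act a (up_class U G f) = up_class U G (\<lambda>i. act a (f i))"
proof (intro Set.set_eqI iffI)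
  fix h assume "h \<in> up_act U G act a (up_class U G f)"
  then obtain x where x: "x \<in> up_class U G f" 
    and h: "h \<in> up_class U G (\<lambda>i. act a (x i))"
    unfolding up_act_def by blast
  have ev: "eventually (\<lambda>i. act a (x i) = act a (f i)) U"
  proof -
    have "eventually (\<lambda>i. x i = f i) U" using x unfolding up_class_def by auto
    then show ?thesis by eventually_elim simp
  qed
  show "h \<in> up_class U G (\<lambda>i. act a (f i))"
    using h unfolding up_class_eqI[OF ev, of G] .
next
  fix h assume "h \<in> up_class U G (\<lambda>i. act a (f i))"
  then show "h \<in> up_act U G act a (up_class U G f)"
    using up_class_mem[OF assms(1)] unfolding up_act_def by blast
qed

lemma up_carrier: "X \<in> carrier (ultrapower U G) \<longleftrightarrow> (\<exists>f. (\<forall>i. f i \<in> carrier G) \<and> X = up_class U G f)"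
  by (auto simp: ultrapower_def)

lemma up_carrierI: "\<forall>i. f i \<in> carrier G \<Longrightarrow> up_class U G f \<in> carrier (ultrapower U G)"
  by (auto simp: ultrapower_def)

lemma up_carrierE:
  assumes "X \<in> carrier (ultrapower U G)"
  obtains f where "\<forall>i. f i \<in> carrier G" "X = up_class U G f"
  using assms by (auto simp: ultrapower_def)

lemma up_one: "one (ultrapower U G) = up_class U G (\<lambda>i. \<one>\<^bsub>G\<^esub>)"
  by (simp add: ultrapower_def)

lemma up_group:
  assumes "group G"
  shows "group (ultrapower U G)"
proof (rule groupI)
  interpret G: group G by fact
  let ?W = "ultrapower U G"
  show "x \<otimes>\<^bsub>?W\<^esub> y \<in> carrier ?W" if H: "x \<in> carrier ?W" "y \<in> carrier ?W" for x y
  proof -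
    obtain f where f: "\<forall>i. f i \<in> carrier G" "x = up_class U G f"
      by (rule up_carrierE[OF H(1)])
    obtain g where g: "\<forall>i. g i \<in> carrier G" "y = up_class U G g"
      by (rule up_carrierE[OF H(2)])
    have "\<forall>i. f i \<otimes>\<^bsub>G\<^esub> g i \<in> carrier G" using f(1) g(1) by simp
    then show ?thesis unfolding f(2) g(2) up_mult_class[OF f(1) g(1)] by (rule up_carrierI)
  qed
  show "\<one>\<^bsub>?W\<^esub> \<in> carrier ?W" unfolding up_one by (rule up_carrierI) simp
  show "x \<otimes>\<^bsub>?W\<^esub> y \<otimes>\<^bsub>?W\<^esub> z = x \<otimes>\<^bsub>?W\<^esub> (y \<otimes>\<^bsub>?W\<^esub> z)"
    if H: "x \<in> carrier ?W" "y \<in> carrier ?W" "z \<in> carrier ?W" for x y z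
  proof -
    obtain f where f: "\<forall>i. f i \<in> carrier G" "x = up_class U G f"
      by (rule up_carrierE[OF H(1)])
    obtain g where g: "\<forall>i. g i \<in> carrier G" "y = up_class U G g"
      by (rule up_carrierE[OF H(2)])
    obtain h where h: "\<forall>i. h i \<in> carrier G" "z = up_class U G h"
      by (rule up_carrierE[OF H(3)])
    have fg: "\<forall>i. f i \<otimes>\<^bsub>G\<^esub> g i \<in> carrier G" using f(1) g(1) by simp
    have gh: "\<forall>i. g i \<otimes>\<^bsub>G\<^esub> h i \<in> carrier G" using g(1) h(1) by simp
    show ?thesis
      unfolding f(2) g(2) h(2) up_mult_class[OF f(1) g(1)] up_mult_class[OF g(1) h(1)]
        up_mult_class[OF fg h(1)] up_mult_class[OF f(1) gh]
      using f(1) g(1) h(1) by (simp add: G.m_assoc)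
  qed
  show "\<one>\<^bsub>?W\<^esub> \<otimes>\<^bsub>?W\<^esub> x = x" if H: "x \<in> carrier ?W" for x
  proof -
    obtain f where f: "\<forall>i. f i \<in> carrier G" "x = up_class U G f"
      by (rule up_carrierE[OF H(1)])
    have o: "\<forall>i. \<one>\<^bsub>G\<^esub> \<in> carrier G" by simp
    show ?thesis unfolding f(2) up_one up_mult_class[OF o f(1)] using f(1) by simp
  qed
  show "\<exists>y\<in>carrier ?W. y \<otimes>\<^bsub>?W\<^esub> x = \<one>\<^bsub>?W\<^esub>" if H: "x \<in> carrier ?W" for x
  proof -
    obtain f where f: "\<forall>i. f i \<in> carrier G" "x = up_class U G f"
      by (rule up_carrierE[OF H(1)])
    have fi: "\<forall>i. inv\<^bsub>G\<^esub> f i \<in> carrier G" using f(1) by simp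
    have "up_class U G (\<lambda>i. inv\<^bsub>G\<^esub> f i) \<in> carrier ?W"
      using fi by (rule up_carrierI)
    moreover have "up_class U G (\<lambda>i. inv\<^bsub>G\<^esub> f i) \<otimes>\<^bsub>?W\<^esub> x = \<one>\<^bsub>?W\<^esub>"
      unfolding f(2) up_one up_mult_class[OF fi f(1)] using f(1) by simp
    ultimately show ?thesis by blast
  qed
qed

lemma up_inv:
  assumes "group G" "\<forall>i. f i \<in> carrier G"
  shows "inv\<^bsub>ultrapower U G\<^esub> (up_class U G f) = up_class U G (\<lambda>i. inv\<^bsub>G\<^esub> f i)"
proof -
  interpret G: group G by fact
  interpret W: group "ultrapower U G" by (rule up_group[OF assms(1)])
  have fi: "\<forall>i. inv\<^bsub>G\<^esub> f i \<in> carrier G" using assms(2) by simp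
  show ?thesis
  proof (rule W.inv_equality)
    show "up_class U G (\<lambda>i. inv\<^bsub>G\<^esub> f i) \<in> carrier (ultrapower U G)"
      using fi by (rule up_carrierI)
    show "up_class U G f \<in> carrier (ultrapower U G)"
      using assms(2) by (rule up_carrierI)
    show "up_class U G (\<lambda>i. inv\<^bsub>G\<^esub> f i) \<otimes>\<^bsub>ultrapower U G\<^esub> up_class U G f = \<one>\<^bsub>ultrapower U G\<^esub>"
      unfolding up_one up_mult_class[OF fi assms(2)] using assms(2) by simp
  qed
qed

lemma Vex_carrier: "v \<in> carrier Vex \<longleftrightarrow> finite {i. v i \<noteq> 0}"
  by (simp add: Vex_def)

lemma Vex_mult: "v \<otimes>\<^bsub>Vex\<^esub> w = (\<lambda>i. v i + w i)"
  by (simp add: Vex_def)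

lemma Vex_one: "\<one>\<^bsub>Vex\<^esub> = (\<lambda>i. 0)"
  by (simp add: Vex_def)

lemma Vex_add_closed:
  assumes "v \<in> carrier Vex" "w \<in> carrier Vex"
  shows "(\<lambda>i. v i + w i) \<in> carrier Vex"
proof -
  have "{i. v i + w i \<noteq> 0} \<subseteq> {i. v i \<noteq> 0} \<union> {i. w i \<noteq> 0}" by auto
  then show ?thesis using assms unfolding Vex_carrier by (meson finite_Un finite_subset)
qed

lemma Vex_neg_closed:
  assumes "v \<in> carrier Vex"
  shows "(\<lambda>i. - v i) \<in> carrier Vex"
  using assms unfolding Vex_carrier by simp

lemma group_Vex: "group Vex"
proof (rule groupI)
  show "x \<otimes>\<^bsub>Vex\<^esub> y \<in> carrier Vex" if "x \<in> carrier Vex" "y \<in> carrier Vex" for x y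
    using Vex_add_closed[OF that] by (simp add: Vex_mult)
  show "\<one>\<^bsub>Vex\<^esub> \<in> carrier Vex" by (simp add: Vex_one Vex_carrier)
  show "x \<otimes>\<^bsub>Vex\<^esub> y \<otimes>\<^bsub>Vex\<^esub> z = x \<otimes>\<^bsub>Vex\<^esub> (y \<otimes>\<^bsub>Vex\<^esub> z)" for x y z
    by (simp add: Vex_mult add.assoc)
  show "\<one>\<^bsub>Vex\<^esub> \<otimes>\<^bsub>Vex\<^esub> x = x" for x
    by (simp add: Vex_mult Vex_one)
  show "\<exists>y\<in>carrier Vex. y \<otimes>\<^bsub>Vex\<^esub> x = \<one>\<^bsub>Vex\<^esub>" if "x \<in> carrier Vex" for x
    using Vex_neg_closed[OF that] by (intro bexI[of _ "\<lambda>i. - x i"]) (auto simp: Vex_mult Vex_one)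
qed

lemma Vex_inv:
  assumes "v \<in> carrier Vex"
  shows "inv\<^bsub>Vex\<^esub> v = (\<lambda>i. - v i)"
proof -
  interpret V: group Vex by (rule group_Vex)
  show ?thesis
    by (rule V.inv_equality) (use assms Vex_neg_closed[OF assms] in \<open>auto simp: Vex_mult Vex_one\<close>)
qed

lemma act_carrier:
  assumes "v \<in> carrier Vex"
  shows "act_ex a v \<in> carrier Vex"
proof -
  have "{i. act_ex a v i \<noteq> 0} \<subseteq> {i. v i \<noteq> 0}" by (auto simp: act_ex_def)
  then show ?thesis using assms unfolding Vex_carrier by (meson finite_subset)
qed

lemma act_hom: "act_ex a \<in> hom Vex Vex"
  unfolding hom_def using act_carrier by (auto simp: Vex_mult act_ex_def distrib_left)

lemma act_comp: "act_ex a (act_ex b v) = act_ex (a * b) v"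
  by (simp add: act_ex_def power_mult_distrib mult_ac)

lemma act_one: "act_ex 1 v = v"
  by (simp add: act_ex_def)

lemma odd_pow_inj:
  assumes "(a::real) ^ (2 * i + 1) = b ^ (2 * i + 1)"
  shows "a = b"
proof -
  have "odd (2 * i + 1)" by simp
  then show ?thesis using assms by (metis odd_real_root_power_cancel)
qed

lemma single_Q:
  assumes "v \<in> carrier Vex" "\<forall>i. i \<noteq> k \<longrightarrow> v i = 0"
  shows "v \<in> quasi_kernel Vex UNIV act_ex"
proof -
  have "\<exists>c. act_ex a v \<otimes>\<^bsub>Vex\<^esub> act_ex b v = act_ex c v" for a b
  proof -
    define c where "c = root (2 * k + 1) (a ^ (2 * k + 1) + b ^ (2 * k + 1))"
    have c: "c ^ (2 * k + 1) = a ^ (2 * k + 1) + b ^ (2 * k + 1)"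
      unfolding c_def by (rule odd_real_root_pow) simp
    have "act_ex a v \<otimes>\<^bsub>Vex\<^esub> act_ex b v = act_ex c v"
    proof
      fix i
      show "(act_ex a v \<otimes>\<^bsub>Vex\<^esub> act_ex b v) i = act_ex c v i"
        using assms(2) c by (cases "i = k") (auto simp: Vex_mult act_ex_def distrib_right)
    qed
    then show ?thesis by blast
  qed
  then show ?thesis using assms(1) unfolding quasi_kernel_def by auto
qed

lemma generate_Vex:
  "generate Vex (quasi_kernel Vex UNIV act_ex) = carrier Vex"
proof
  interpret V: group Vex by (rule group_Vex)
  show "generate Vex (quasi_kernel Vex UNIV act_ex) \<subseteq> carrier Vex"
    by (rule V.generate_incl) (auto simp: quasi_kernel_def)
  have main: "\<forall>v. {i. v i \<noteq> 0} \<subseteq> S \<longrightarrow> v \<in> generate Vex (quasi_kernel Vex UNIV act_ex)"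
    if "finite S" for S :: "nat set"
    using that
  proof (induction S rule: finite_induct)
    case empty
    show ?case
    proof (intro allI impI)
      fix v :: "nat \<Rightarrow> real" assume "{i. v i \<noteq> 0} \<subseteq> {}"
      then have "v = \<one>\<^bsub>Vex\<^esub>" by (auto simp: Vex_one)
      then show "v \<in> generate Vex (quasi_kernel Vex UNIV act_ex)" using generate.one by simp
    qed
  next
    case (insert k S)
    show ?case
    proof (intro allI impI)
      fix v :: "nat \<Rightarrow> real" assume sub: "{i. v i \<noteq> 0} \<subseteq> insert k S"
      define v1 where "v1 = v(k := 0)"
      define v2 where "v2 = (\<lambda>i. if i = k then v k else 0)"
      have "{i. v1 i \<noteq> 0} \<subseteq> S" using sub by (auto simp: v1_def)
      then have g1: "v1 \<in> generate Vex (quasi_kernel Vex UNIV act_ex)" using insert.IH by blast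
      have "{i. v2 i \<noteq> 0} \<subseteq> {k}" by (auto simp: v2_def)
      then have "v2 \<in> carrier Vex" unfolding Vex_carrier using finite_subset by blast
      then have "v2 \<in> quasi_kernel Vex UNIV act_ex"
        by (rule single_Q[where k = k]) (simp add: v2_def)
      then have g2: "v2 \<in> generate Vex (quasi_kernel Vex UNIV act_ex)" by (rule generate.incl)
      have "v = v1 \<otimes>\<^bsub>Vex\<^esub> v2" by (auto simp: Vex_mult v1_def v2_def)
      then show "v \<in> generate Vex (quasi_kernel Vex UNIV act_ex)"
        using generate.eng[OF g1 g2] by simp
    qed
  qed
  show "carrier Vex \<subseteq> generate Vex (quasi_kernel Vex UNIV act_ex)"
  proof
    fix v assume "v \<in> carrier Vex"
    then have "finite {i. v i \<noteq> 0}" by (simp add: Vex_carrier)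
    then show "v \<in> generate Vex (quasi_kernel Vex UNIV act_ex)" using main by blast
  qed
qed

lemma same_map_zero: "same_map Vex (act_ex a) (\<lambda>x. \<one>\<^bsub>Vex\<^esub>) \<longleftrightarrow> a = 0"
proof
  assume "same_map Vex (act_ex a) (\<lambda>x. \<one>\<^bsub>Vex\<^esub>)"
  moreover have "(\<lambda>i. 1::real) \<in> carrier Vex \<Longrightarrow> False" by (simp add: Vex_carrier)
  have "(\<lambda>i. if i = 0 then 1 else 0::real) \<in> carrier Vex" by (simp add: Vex_carrier)
  ultimately have "act_ex a (\<lambda>i. if i = 0 then 1 else 0) = (\<lambda>i. 0)"
    unfolding same_map_def Vex_one by blast
  then have "act_ex a (\<lambda>i. if i = 0 then 1 else 0) 0 = 0" by simp
  then show "a = 0" by (simp add: act_ex_def)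
qed (simp add: same_map_def act_ex_def Vex_one)

lemma F_group_Vex: "F_group Vex (UNIV :: real set) act_ex"
  unfolding F_group_def
proof (intro conjI)
  show "group Vex" by (rule group_Vex)
  show "\<forall>a\<in>UNIV. act_ex a \<in> hom Vex Vex" using act_hom by blast
  show "\<exists>a\<in>UNIV. same_map Vex (act_ex a) (\<lambda>x. \<one>\<^bsub>Vex\<^esub>)"
    using same_map_zero by blast
  show "\<exists>a\<in>UNIV. same_map Vex (act_ex a) (\<lambda>x. x)"
    by (rule bexI[of _ 1]) (auto simp: same_map_def act_one)
  show "\<exists>a\<in>UNIV. same_map Vex (act_ex a) (\<lambda>x. inv\<^bsub>Vex\<^esub> x)"
    by (rule bexI[of _ "-1"]) (auto simp: same_map_def Vex_inv act_ex_def)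
  show "\<forall>a\<in>UNIV. \<not> same_map Vex (act_ex a) (\<lambda>x. \<one>\<^bsub>Vex\<^esub>) \<longrightarrow>
      bij_betw (act_ex a) (carrier Vex) (carrier Vex)"
  proof (intro ballI impI)
    fix a :: real assume "\<not> same_map Vex (act_ex a) (\<lambda>x. \<one>\<^bsub>Vex\<^esub>)"
    then have a: "a \<noteq> 0" using same_map_zero by blast
    show "bij_betw (act_ex a) (carrier Vex) (carrier Vex)"
    proof (rule bij_betw_byWitness[where f' = "act_ex (inverse a)"])
      show "\<forall>x\<in>carrier Vex. act_ex (inverse a) (act_ex a x) = x"
        using a by (simp add: act_comp act_one)
      show "\<forall>x\<in>carrier Vex. act_ex a (act_ex (inverse a) x) = x"
        using a by (simp add: act_comp act_one)
      show "act_ex a ` carrier Vex \<subseteq> carrier Vex" using act_carrier by blast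
      show "act_ex (inverse a) ` carrier Vex \<subseteq> carrier Vex" using act_carrier by blast
    qed
  qed
  show "\<forall>a\<in>UNIV. \<forall>b\<in>UNIV. \<not> same_map Vex (act_ex a) (\<lambda>x. \<one>\<^bsub>Vex\<^esub>) \<longrightarrow>
      \<not> same_map Vex (act_ex b) (\<lambda>x. \<one>\<^bsub>Vex\<^esub>) \<longrightarrow>
      (\<exists>c\<in>UNIV. same_map Vex (act_ex c) (act_ex a \<circ> act_ex b))"
    by (auto simp: same_map_def act_comp)
  show "\<forall>a\<in>UNIV. \<not> same_map Vex (act_ex a) (\<lambda>x. \<one>\<^bsub>Vex\<^esub>) \<longrightarrow>
      (\<exists>c\<in>UNIV. \<forall>x\<in>carrier Vex. act_ex c (act_ex a x) = x)"
  proof (intro ballI impI)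
    fix a :: real assume "\<not> same_map Vex (act_ex a) (\<lambda>x. \<one>\<^bsub>Vex\<^esub>)"
    then have a: "a \<noteq> 0" using same_map_zero by blast
    show "\<exists>c\<in>UNIV. \<forall>x\<in>carrier Vex. act_ex c (act_ex a x) = x"
      using a by (intro bexI[of _ "inverse a"]) (simp_all add: act_comp act_one)
  qed
  show "\<forall>a\<in>UNIV. \<forall>b\<in>UNIV. \<forall>x\<in>carrier Vex. act_ex a x = act_ex b x \<longrightarrow>
      same_map Vex (act_ex a) (act_ex b) \<or> x = \<one>\<^bsub>Vex\<^esub>"
  proof (intro ballI impI)
    fix a b :: real and x assume eq: "act_ex a x = act_ex b x"
    show "same_map Vex (act_ex a) (act_ex b) \<or> x = \<one>\<^bsub>Vex\<^esub>"
    proof (cases "x = \<one>\<^bsub>Vex\<^esub>")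
      case False
      then obtain i where i: "x i \<noteq> 0" by (auto simp: Vex_one)
      have "a ^ (2 * i + 1) * x i = b ^ (2 * i + 1) * x i"
        using fun_cong[OF eq, of i] by (simp add: act_ex_def)
      then have "a ^ (2 * i + 1) = b ^ (2 * i + 1)" using i by simp
      then have "a = b" by (rule odd_pow_inj)
      then show ?thesis by (simp add: same_map_def)
    qed simp
  qed
qed

lemma nvs_Vex: "near_vector_space Vex (UNIV :: real set) act_ex"
  unfolding near_vector_space_def using F_group_Vex generate_Vex by blast


lemma pow_two_unique:
  "\<exists>k. \<forall>i. (c::real) ^ (2 * i + 1) = 2 \<longrightarrow> i = k"
proof (cases "\<exists>i0. c ^ (2 * i0 + 1) = 2")
  case True
  then obtain i0 where i0: "c ^ (2 * i0 + 1) = 2" by blast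
  have "0 < c ^ (2 * i0 + 1)" using i0 by simp
  have "odd (2 * i0 + 1)" "2 * i0 + 1 \<noteq> 0" by simp_all
  then have cpos: "0 < c" using zero_less_power_eq[of c "2 * i0 + 1"] \<open>0 < c ^ (2 * i0 + 1)\<close> by metis
  have c1: "c \<noteq> 1" using i0 by auto
  have "i = i0" if "c ^ (2 * i + 1) = 2" for i
  proof -
    have "c ^ (2 * i + 1) = c ^ (2 * i0 + 1)" using that i0 by simp
    then have "2 * i + 1 = 2 * i0 + 1" using power_inject_exp'[OF c1 cpos] by blast
    then show ?thesis by simp
  qed
  then show ?thesis by blast
qed auto

lemma Q_W_repr:
  assumes "X \<in> quasi_kernel (ultrapower U Vex) UNIV (up_act U Vex act_ex)"
  shows "\<exists>f k. (\<forall>n. f n \<in> carrier Vex) \<and> X = up_class U Vex f \<and> (\<forall>n i. i \<noteq> k \<longrightarrow> f n i = 0)"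
proof -
  have Xc: "X \<in> carrier (ultrapower U Vex)" using assms by (simp add: quasi_kernel_def)
  then obtain g where g: "\<forall>n. g n \<in> carrier Vex" "X = up_class U Vex g"
    unfolding up_carrier by blast
  obtain c where c: "up_act U Vex act_ex 1 X \<otimes>\<^bsub>ultrapower U Vex\<^esub> up_act U Vex act_ex 1 X
      = up_act U Vex act_ex c X"
    using assms unfolding quasi_kernel_def by blast
  have ac: "\<forall>n. act_ex a (g n) \<in> carrier Vex" for a using g(1) act_carrier by blast
  have "up_class U Vex (\<lambda>n. act_ex 1 (g n) \<otimes>\<^bsub>Vex\<^esub> act_ex 1 (g n)) = up_class U Vex (\<lambda>n. act_ex c (g n))"
    using c unfolding g(2) up_act_class[OF g(1)] up_mult_class[OF ac ac] .
  then have ev: "eventually (\<lambda>n. act_ex 1 (g n) \<otimes>\<^bsub>Vex\<^esub> act_ex 1 (g n) = act_ex c (g n)) U"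
    by (rule up_class_eqD) (unfold Vex_mult, use ac Vex_add_closed in blast)
  obtain k where k: "\<forall>i. c ^ (2 * i + 1) = 2 \<longrightarrow> i = k" using pow_two_unique by blast
  define P where "P n \<longleftrightarrow> (\<forall>i. i \<noteq> k \<longrightarrow> g n i = 0)" for n
  have evP: "eventually P U"
    using ev
  proof eventually_elim
    case (elim n)
    show "P n" unfolding P_def
    proof (intro allI impI)
      fix i assume "i \<noteq> k"
      then have ne: "c ^ (2 * i + 1) \<noteq> 2" using k by blast
      have "g n i + g n i = c ^ (2 * i + 1) * g n i"
        using fun_cong[OF elim, of i] by (simp add: Vex_mult act_ex_def)
      then have "(2 - c ^ (2 * i + 1)) * g n i = 0" by (simp add: algebra_simps)
      then show "g n i = 0" using ne by simp
    qed
  qed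
  define f where "f n = (if P n then g n else (\<lambda>i. 0))" for n
  have fc: "\<forall>n. f n \<in> carrier Vex" using g(1) by (simp add: f_def Vex_carrier)
  have "eventually (\<lambda>n. f n = g n) U" using evP by eventually_elim (simp add: f_def)
  then have Xf: "X = up_class U Vex f" unfolding g(2) by (rule up_class_eqI[symmetric])
  have z: "\<forall>n i. i \<noteq> k \<longrightarrow> f n i = 0" by (simp add: f_def P_def)
  show ?thesis by (rule exI[of _ f], rule exI[of _ k]) (intro conjI fc Xf z)
qed

definition Sfin :: "nat filter \<Rightarrow> (nat \<Rightarrow> nat \<Rightarrow> real) set set" where
  "Sfin U = {X. \<exists>f K. (\<forall>n. f n \<in> carrier Vex) \<and> finite K \<and> X = up_class U Vex f \<and>
      (\<forall>n i. i \<notin> K \<longrightarrow> f n i = 0)}"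

lemma SfinI:
  assumes "\<forall>n. f n \<in> carrier Vex" "finite K" "\<forall>n i. i \<notin> K \<longrightarrow> f n i = 0"
  shows "up_class U Vex f \<in> Sfin U"
  unfolding Sfin_def mem_Collect_eq using assms by blast

lemma SfinD:
  assumes "X \<in> Sfin U"
  shows "\<exists>f K. (\<forall>n. f n \<in> carrier Vex) \<and> finite K \<and> X = up_class U Vex f \<and>
      (\<forall>n i. i \<notin> K \<longrightarrow> f n i = 0)"
  using assms unfolding Sfin_def mem_Collect_eq .

lemma Q_W_Sfin:
  assumes "X \<in> quasi_kernel (ultrapower U Vex) UNIV (up_act U Vex act_ex)"
  shows "X \<in> Sfin U"
proof -
  obtain f k where f: "\<forall>n. f n \<in> carrier Vex" "X = up_class U Vex f" "\<forall>n i. i \<noteq> k \<longrightarrow> f n i = 0"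
    using Q_W_repr[OF assms] by blast
  have z: "\<forall>n i. i \<notin> {k} \<longrightarrow> f n i = 0" using f(3) by simp
  have "up_class U Vex f \<in> Sfin U" by (rule SfinI[OF f(1) _ z]) simp
  then show ?thesis using f(2) by simp
qed

lemma generate_Sfin:
  "generate (ultrapower U Vex) (quasi_kernel (ultrapower U Vex) UNIV (up_act U Vex act_ex)) \<subseteq> Sfin U"
proof
  fix X assume "X \<in> generate (ultrapower U Vex) (quasi_kernel (ultrapower U Vex) UNIV (up_act U Vex act_ex))"
  then show "X \<in> Sfin U"
  proof induction
    case one
    have "up_class U Vex (\<lambda>n. \<one>\<^bsub>Vex\<^esub>) \<in> Sfin U"
      by (rule SfinI[where K = "{}"]) (simp_all add: Vex_one Vex_carrier)
    then show ?case by (simp add: up_one)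
  next
    case (incl h)
    then show ?case by (rule Q_W_Sfin)
  next
    case (inv h)
    obtain f k where f: "\<forall>n. f n \<in> carrier Vex" "h = up_class U Vex f" "\<forall>n i. i \<noteq> k \<longrightarrow> f n i = 0"
      using Q_W_repr[OF inv] by blast
    have eq: "inv\<^bsub>ultrapower U Vex\<^esub> h = up_class U Vex (\<lambda>n i. - f n i)"
      unfolding f(2) up_inv[OF group_Vex f(1)] using f(1) by (simp add: Vex_inv)
    have c: "\<forall>n. (\<lambda>i. - f n i) \<in> carrier Vex" using f(1) Vex_neg_closed by blast
    have z: "\<forall>n i. i \<notin> {k} \<longrightarrow> - f n i = 0" using f(3) by simp
    have "up_class U Vex (\<lambda>n i. - f n i) \<in> Sfin U"
      by (rule SfinI[OF c _ z]) simp
    then show ?case unfolding eq .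
  next
    case (eng h1 h2)
    obtain f1 K1 where f1: "\<forall>n. f1 n \<in> carrier Vex" "finite K1" "h1 = up_class U Vex f1"
        "\<forall>n i. i \<notin> K1 \<longrightarrow> f1 n i = 0"
      using SfinD[OF eng.IH(1)] by blast
    obtain f2 K2 where f2: "\<forall>n. f2 n \<in> carrier Vex" "finite K2" "h2 = up_class U Vex f2"
        "\<forall>n i. i \<notin> K2 \<longrightarrow> f2 n i = 0"
      using SfinD[OF eng.IH(2)] by blast
    have eq: "h1 \<otimes>\<^bsub>ultrapower U Vex\<^esub> h2 = up_class U Vex (\<lambda>n i. f1 n i + f2 n i)"
      unfolding f1(3) f2(3) up_mult_class[OF f1(1) f2(1)] by (simp add: Vex_mult)
    have c: "\<forall>n. (\<lambda>i. f1 n i + f2 n i) \<in> carrier Vex" using f1(1) f2(1) Vex_add_closed by blast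
    have z: "\<forall>n i. i \<notin> K1 \<union> K2 \<longrightarrow> f1 n i + f2 n i = 0" using f1(4) f2(4) by simp
    have "up_class U Vex (\<lambda>n i. f1 n i + f2 n i) \<in> Sfin U"
      by (rule SfinI[OF c _ z]) (simp add: f1(2) f2(2))
    then show ?case unfolding eq .
  qed
qed

lemma finite_not_eventually:
  assumes "ultrafilter U" "nonprincipal U" "finite K"
  shows "\<not> eventually (\<lambda>n. n \<in> K) U"
  using assms(3)
proof (induction K rule: finite_induct)
  case empty
  show ?case using assms(1) by (simp add: ultrafilter_def)
next
  case (insert k K)
  show ?case
  proof
    assume ev: "eventually (\<lambda>n. n \<in> insert k K) U"
    have "\<not> eventually (\<lambda>n. n = k) U" using assms(2) by (simp add: nonprincipal_def)
    moreover have "eventually (\<lambda>n. n = k) U \<or> eventually (\<lambda>n. \<not> n = k) U"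
      using assms(1) unfolding ultrafilter_def by blast
    ultimately have "eventually (\<lambda>n. \<not> n = k) U" by blast
    with ev have "eventually (\<lambda>n. n \<in> K) U" by eventually_elim simp
    with insert.IH show False by blast
  qed
qed

definition evec :: "nat \<Rightarrow> nat \<Rightarrow> real" where
  "evec n = (\<lambda>i. if i = n then 1 else 0)"

lemma evec_carrier: "evec n \<in> carrier Vex"
proof -
  have "{i. evec n i \<noteq> 0} = {n}" by (auto simp: evec_def)
  then show ?thesis by (simp add: Vex_carrier)
qed

lemma evec_Q: "evec n \<in> quasi_kernel Vex UNIV act_ex"
  by (rule single_Q[OF evec_carrier, where k = n]) (simp add: evec_def)

lemma evec_not_Sfin:
  assumes "ultrafilter U" "nonprincipal U"
  shows "up_class U Vex evec \<notin> Sfin U"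
proof
  assume "up_class U Vex evec \<in> Sfin U"
  then obtain f K where f: "\<forall>n. f n \<in> carrier Vex" "finite K" "up_class U Vex evec = up_class U Vex f"
      "\<forall>n i. i \<notin> K \<longrightarrow> f n i = 0"
    using SfinD by blast
  have "eventually (\<lambda>n. evec n = f n) U"
    by (rule up_class_eqD[OF f(3)]) (simp add: evec_carrier)
  then have "eventually (\<lambda>n. n \<in> K) U"
  proof eventually_elim
    case (elim n)
    then have "f n n = evec n n" by simp
    then have "f n n = 1" by (simp add: evec_def)
    then show "n \<in> K" using f(4) by (metis zero_neq_one)
  qed
  then show False using finite_not_eventually[OF assms f(2)] by blast
qed

lemma evec_W_carrier: "up_class U Vex evec \<in> carrier (ultrapower U Vex)"
  unfolding up_carrier using evec_carrier by blast

theorem mainTheorem12: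
  shows "near_vector_space Vex (UNIV :: real set) act_ex \<and>
    (\<forall>U :: nat filter. ultrafilter U \<and> nonprincipal U \<longrightarrow>
       \<not> near_vector_space (ultrapower U Vex) (UNIV :: real set) (up_act U Vex act_ex) \<and>
       generate (ultrapower U Vex) (quasi_kernel (ultrapower U Vex) UNIV (up_act U Vex act_ex))
         \<noteq> carrier (ultrapower U Vex) \<and>
       quasi_kernel (ultrapower U Vex) UNIV (up_act U Vex act_ex)
         \<subset> up_prod U Vex (quasi_kernel Vex UNIV act_ex))"
proof (intro conjI allI impI)
  show "near_vector_space Vex (UNIV :: real set) act_ex" by (rule nvs_Vex)
  fix U :: "nat filter" assume U: "ultrafilter U \<and> nonprincipal U"
  let ?W = "ultrapower U Vex"
  let ?Q = "quasi_kernel ?W UNIV (up_act U Vex act_ex)"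
  have nS: "up_class U Vex evec \<notin> Sfin U" using evec_not_Sfin U by blast
  have notin: "up_class U Vex evec \<notin> generate ?W ?Q"
  proof
    assume "up_class U Vex evec \<in> generate ?W ?Q"
    then have "up_class U Vex evec \<in> Sfin U" using generate_Sfin[of U] by (rule rev_subsetD)
    then show False using nS by simp
  qed
  show gen: "generate ?W ?Q \<noteq> carrier ?W"
  proof
    assume "generate ?W ?Q = carrier ?W"
    then show False using notin evec_W_carrier[of U] by simp
  qed
  show "\<not> near_vector_space ?W (UNIV :: real set) (up_act U Vex act_ex)"
    using gen unfolding near_vector_space_def by simp
  have sub: "?Q \<subseteq> up_prod U Vex (quasi_kernel Vex UNIV act_ex)"
  proof
    fix X assume "X \<in> ?Q"
    then obtain f k where f: "\<forall>n. f n \<in> carrier Vex" "X = up_class U Vex f" "\<forall>n i. i \<noteq> k \<longrightarrow> f n i = 0"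
      using Q_W_repr by blast
    have fq: "\<forall>n. f n \<in> quasi_kernel Vex UNIV act_ex"
    proof
      fix n
      show "f n \<in> quasi_kernel Vex UNIV act_ex"
        by (rule single_Q[of _ k]) (use f in auto)
    qed
    show "X \<in> up_prod U Vex (quasi_kernel Vex UNIV act_ex)"
      unfolding up_prod_def mem_Collect_eq using f(2) fq by blast
  qed
  have in_prod: "up_class U Vex evec \<in> up_prod U Vex (quasi_kernel Vex UNIV act_ex)"
    unfolding up_prod_def mem_Collect_eq using evec_Q by blast
  have nq: "up_class U Vex evec \<notin> ?Q"
  proof
    assume "up_class U Vex evec \<in> ?Q"
    then have "up_class U Vex evec \<in> generate ?W ?Q" by (rule generate.incl)
    then show False using notin by simp
  qed
  have ne: "?Q \<noteq> up_prod U Vex (quasi_kernel Vex UNIV act_ex)"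
  proof
    assume "?Q = up_prod U Vex (quasi_kernel Vex UNIV act_ex)"
    then show False using nq in_prod by simp
  qed
  show "?Q \<subset> up_prod U Vex (quasi_kernel Vex UNIV act_ex)"
    using sub ne by (simp add: psubset_eq)
qed

end
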